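(* In the setting described in the context, suppose that the path satisfies $\lim_{\ell\to\infty}(\vec n_\ell)_j=\infty$ for every $j=1,\dots,r$. Then for every $\ell\ge0$, $x q_\ell(x)$ is a finite linear combination of the functions $q_0,q_1,\dots$; more precisely, \[ x\,q_\ell(x)=\sum_{k=0}^{\infty}J_{k,\ell}\,q_k(x), \] where only finitely many terms of the sum are nonzero (so multiplication by $x$ maps $\operatorname{span}\{q_k:k\ge0\}$ into itself, with matrix the transpose of $J$).
   Context: Let $r\ge1$ and let $\mu_1,\dots,\mu_r$ be positive Borel measures on $\mathbb{R}$ with all moments finite, forming a perfect system: for every $\vec n\in\mathbb{N}_0^r$ there is a monic polynomial $P_{\vec n}$ of degree $|\vec n|=n_1+\dots+n_r$ with $\int x^kP_{\vec n}\,d\mu_j=0$ for $0\le k\le n_j-1$, $1\le j\le r$. The type I multiple orthogonal polynomials $A_{\vec n}=(A_{\vec n,1},\dots,A_{\vec n,r})$ are defined by $\deg A_{\vec n,j}\le n_j-1$, $\sum_{j}\int x^kA_{\vec n,j}\,d\mu_j=0$ for $0\le k\le|\vec n|-2$ and $\sum_j\int x^{|\vec n|-1}A_{\vec n,j}\,d\mu_j=1$ (they exist uniquely for perfect systems). Let $\mu$ be a positive measure with $\mu_j\ll\mu$ for all $j$, $w_j=d\mu_j/d\mu$, and $Q_{\vec n}=\sum_{j=1}^rA_{\vec n,j}w_j$. Fix a path $(\vec n_\ell)_{\ell\ge0}$ with $|\vec n_\ell|=\ell$ and $\vec n_{\ell+1}=\vec n_\ell+\vec e_{i_\ell}$ ($\vec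 e_j$ the $j$-th unit vector, $i_\ell\in\{1,\dots,r\}$), and set $p_\ell=P_{\vec n_\ell}$, $q_\ell=Q_{\vec n_{\ell+1}}$; these satisfy $\int p_\ell q_{\ell'}\,d\mu=\delta_{\ell,\ell'}$. The matrix $J=[J_{\ell,k}]_{\ell,k\ge0}$ is defined by $xp_\ell=\sum_{k=0}^{\ell+1}J_{\ell,k}p_k$, with $J_{\ell,k}=0$ for $k>\ell+1$. *)

theory Defs
  imports "HOL-Analysis.Analysis" "HOL-Probability.Probability" "HOL-Computational_Algebra.Polynomial"
begin

text \<open>Multi-indices are functions nat => nat; only the values on {1..r} matter.\<close>

definition mi_size :: "nat \<Rightarrow> (nat \<Rightarrow> nat) \<Rightarrow> nat" where
  "mi_size r n = (\<Sum>j=1..r. n j)"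

definition typeII :: "nat \<Rightarrow> (nat \<Rightarrow> real measure) \<Rightarrow> (nat \<Rightarrow> nat) \<Rightarrow> real poly \<Rightarrow> bool" where
  "typeII r \<mu>s n P \<longleftrightarrow> degree P = mi_size r n \<and> lead_coeff P = 1 \<and>
     (\<forall>j\<in>{1..r}. \<forall>k<n j. (\<integral>x. x ^ k * poly P x \<partial>(\<mu>s j)) = 0)"

definition perfect_system :: "nat \<Rightarrow> (nat \<Rightarrow> real measure) \<Rightarrow> bool" where
  "perfect_system r \<mu>s \<longleftrightarrow> (\<forall>n. \<exists>!P. typeII r \<mu>s n P)"

definition typeII_poly :: "nat \<Rightarrow> (nat \<Rightarrow> real measure) \<Rightarrow> (nat \<Rightarrow> nat) \<Rightarrow> real poly" where
  "typeII_poly r \<mu>s n = (THE P. typeII r \<mu>s n P)"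

text \<open>Type I vector (A_1,...,A_r), with A_j = 0 outside {1..r}; deg A_j \<le> n_j - 1 means A_j = 0 when n_j = 0.\<close>
definition typeI :: "nat \<Rightarrow> (nat \<Rightarrow> real measure) \<Rightarrow> (nat \<Rightarrow> nat) \<Rightarrow> (nat \<Rightarrow> real poly) \<Rightarrow> bool" where
  "typeI r \<mu>s n A \<longleftrightarrow>
     (\<forall>j. j \<notin> {1..r} \<longrightarrow> A j = 0) \<and>
     (\<forall>j\<in>{1..r}. A j = 0 \<or> degree (A j) < n j) \<and>
     (\<forall>k. k + 2 \<le> mi_size r n \<longrightarrow> (\<Sum>j=1..r. (\<integral>x. x ^ k * poly (A j) x \<partial>(\<mu>s j))) = 0) \<and>
     (\<Sum>j=1..r. (\<integral>x. x ^ (mi_size r n - 1) * poly (A j) x \<partial>(\<mu>s j))) = 1"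

definition typeI_vec :: "nat \<Rightarrow> (nat \<Rightarrow> real measure) \<Rightarrow> (nat \<Rightarrow> nat) \<Rightarrow> nat \<Rightarrow> real poly" where
  "typeI_vec r \<mu>s n = (THE A. typeI r \<mu>s n A)"

definition Qfun :: "nat \<Rightarrow> (nat \<Rightarrow> real measure) \<Rightarrow> (nat \<Rightarrow> real \<Rightarrow> real) \<Rightarrow> (nat \<Rightarrow> nat) \<Rightarrow> real \<Rightarrow> real" where
  "Qfun r \<mu>s w n x = (\<Sum>j=1..r. poly (typeI_vec r \<mu>s n j) x * w j x)"

definition is_path :: "nat \<Rightarrow> (nat \<Rightarrow> nat \<Rightarrow> nat) \<Rightarrow> bool" where
  "is_path r ns \<longleftrightarrow> (\<forall>j\<in>{1..r}. ns 0 j = 0) \<and>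
     (\<forall>l. \<exists>i\<in>{1..r}. ns (Suc l) = (ns l)(i := ns l i + 1))"

definition Jmat :: "nat \<Rightarrow> (nat \<Rightarrow> real measure) \<Rightarrow> (nat \<Rightarrow> nat \<Rightarrow> nat) \<Rightarrow> nat \<Rightarrow> nat \<Rightarrow> real" where
  "Jmat r \<mu>s ns l =
     (THE c. (\<forall>k>Suc l. c k = 0) \<and>
        [:0, 1:] * typeII_poly r \<mu>s (ns l) = (\<Sum>k\<le>Suc l. smult (c k) (typeII_poly r \<mu>s (ns k))))"

end

theory Submission
  imports Defs "Jordan_Normal_Form.Determinant"
begin


lemma square_system:
  fixes M :: "nat \<Rightarrow> nat \<Rightarrow> real"
  assumes inj: "\<And>v. (\<forall>a<N. (\<Sum>i<N. v i * M i a) = 0) \<Longrightarrow> (\<forall>i<N. v i = 0)"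
  shows "\<exists>b. \<forall>i<N. (\<Sum>a<N. M i a * b a) = e i"
    and "(\<forall>i<N. (\<Sum>a<N. M i a * b a) = 0) \<Longrightarrow> (\<forall>a<N. b a = 0)"
proof -
  define A where "A = mat N N (\<lambda>(i,a). M i a)"
  have A: "A \<in> carrier_mat N N" unfolding A_def by simp
  have At: "transpose_mat A \<in> carrier_mat N N" using A by simp
  have "det (transpose_mat A) \<noteq> 0"
  proof
    assume "det (transpose_mat A) = 0"
    then obtain v where v: "v \<in> carrier_vec N" "v \<noteq> 0\<^sub>v N" "transpose_mat A *\<^sub>v v = 0\<^sub>v N"
      using det_0_iff_vec_prod_zero_field[OF At] by blast
    have "\<forall>a<N. (\<Sum>i<N. (v $ i) * M i a) = 0"
    proof (intro allI impI)
      fix a assume a: "a < N"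
      have "(transpose_mat A *\<^sub>v v) $ a = 0" using v(3) a by simp
      then show "(\<Sum>i<N. (v $ i) * M i a) = 0"
        using a v(1) unfolding A_def
        by (simp add: mult_mat_vec_def scalar_prod_def lessThan_atLeast0 mult.commute)
    qed
    from inj[OF this] have "\<forall>i<N. v $ i = 0" .
    then have "v = 0\<^sub>v N" using v(1) by (intro eq_vecI) auto
    with v(2) show False by simp
  qed
  then have dA: "det A \<noteq> 0" using det_transpose[OF A] by simp
  have U: "A \<in> Units (ring_mat TYPE(real) N ())" by (rule det_non_zero_imp_unit[OF A dA])
  then obtain B where B: "B \<in> carrier_mat N N" "A * B = 1\<^sub>m N"
    unfolding Units_def ring_mat_def by auto
  define ev where "ev = vec N e"
  define bv where "bv = B *\<^sub>v ev"
  have "A *\<^sub>v bv = ev" unfolding bv_def using A B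
    by (metis assoc_mult_mat_vec ev_def one_mult_mat_vec vec_carrier)
  have "\<forall>i<N. (\<Sum>a<N. M i a * (bv $ a)) = e i"
  proof (intro allI impI)
    fix i assume i: "i < N"
    have "(A *\<^sub>v bv) $ i = ev $ i" using \<open>A *\<^sub>v bv = ev\<close> by simp
    moreover have "bv \<in> carrier_vec N" unfolding bv_def by (rule mult_mat_vec_carrier[OF B(1)]) (simp add: ev_def)
    ultimately show "(\<Sum>a<N. M i a * (bv $ a)) = e i"
      using i unfolding A_def ev_def
      by (simp add: mult_mat_vec_def scalar_prod_def lessThan_atLeast0)
  qed
  then show "\<exists>b. \<forall>i<N. (\<Sum>a<N. M i a * b a) = e i" by blast
  assume h: "\<forall>i<N. (\<Sum>a<N. M i a * b a) = 0"
  define w where "w = vec N b"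
  have "A *\<^sub>v w = 0\<^sub>v N"
    using h unfolding A_def w_def
    by (intro eq_vecI) (auto simp add: mult_mat_vec_def scalar_prod_def lessThan_atLeast0)
  then have "w = 0\<^sub>v N" using det_0_iff_vec_prod_zero_field[OF A] dA unfolding w_def by (metis vec_carrier)
  then show "\<forall>a<N. b a = 0" unfolding w_def by (metis index_vec index_zero_vec(1))
qed



definition cz :: "real poly \<Rightarrow> nat \<Rightarrow> bool" where
  "cz Q n \<longleftrightarrow> (\<forall>i\<ge>n. coeff Q i = 0)"

lemma cz_iff: "cz Q n \<longleftrightarrow> Q = 0 \<or> degree Q < n"
proof
  assume h: "cz Q n"
  show "Q = 0 \<or> degree Q < n"
  proof (rule ccontr)
    assume "\<not> (Q = 0 \<or> degree Q < n)"
    then have "Q \<noteq> 0" "n \<le> degree Q" by auto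
    then show False using h unfolding cz_def by auto
  qed
next
  assume "Q = 0 \<or> degree Q < n"
  then show "cz Q n" unfolding cz_def by (auto intro: coeff_eq_0)
qed

lemma cz_sum_monom: "cz Q n \<Longrightarrow> Q = (\<Sum>i<n. monom (coeff Q i) i)"
  unfolding cz_def by (auto simp: poly_eq_iff coeff_sum)

lemma cz_add: "cz P n \<Longrightarrow> cz Q n \<Longrightarrow> cz (P + Q) n"
  and cz_diff: "cz P n \<Longrightarrow> cz Q n \<Longrightarrow> cz (P - Q) n"
  and cz_smult: "cz P n \<Longrightarrow> cz (Polynomial.smult c P) n"
  and cz_mono: "cz P n \<Longrightarrow> n \<le> m \<Longrightarrow> cz P m"
  and cz_zero: "cz 0 n"
  unfolding cz_def by auto

lemma cz_sum: "finite K \<Longrightarrow> (\<And>k. k \<in> K \<Longrightarrow> cz (f k) n) \<Longrightarrow> cz (\<Sum>k\<in>K. f k) n"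
  unfolding cz_def by (auto simp: coeff_sum)

lemma cz_x: "cz Q n \<Longrightarrow> cz ([:0,1:] * Q) (Suc n)"
  unfolding cz_def
  by (auto simp: coeff_pCons split: nat.splits)

lemma cz_monom_sum: "cz (\<Sum>t<n. monom (c t) t) n"
  unfolding cz_def by (auto simp: coeff_sum)

lemma coeff_monom_sum: "coeff (\<Sum>t<n. monom (c t) t) i = (if i < n then c i else 0)"
  by (auto simp: coeff_sum)

locale mop =
  fixes r :: nat and \<mu>s :: "nat \<Rightarrow> real measure"
  assumes mom: "\<forall>j\<in>{1..r}. \<forall>k::nat. integrable (\<mu>s j) (\<lambda>x. x ^ k)"
    and perf: "perfect_system r \<mu>s"
begin

definition L :: "nat \<Rightarrow> real poly \<Rightarrow> real" where
  "L j P = (\<integral>x. poly P x \<partial>(\<mu>s j))"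

definition Lsum :: "(nat \<Rightarrow> real poly) \<Rightarrow> real" where
  "Lsum B = (\<Sum>j=1..r. L j (B j))"

definition Pr :: "real poly \<Rightarrow> (nat \<Rightarrow> real poly) \<Rightarrow> real" where
  "Pr q B = Lsum (\<lambda>j. q * B j)"

lemma integ: "j \<in> {1..r} \<Longrightarrow> integrable (\<mu>s j) (\<lambda>x. poly P x)"
proof -
  assume j: "j \<in> {1..r}"
  have "integrable (\<mu>s j) (\<lambda>x. \<Sum>i\<le>degree P. coeff P i * x ^ i)"
    using mom j by (intro Bochner_Integration.integrable_sum integrable_mult_right) auto
  then show ?thesis unfolding poly_altdef .
qed

lemma L_add: "j \<in> {1..r} \<Longrightarrow> L j (P + Q) = L j P + L j Q"
  unfolding L_def poly_add by (rule Bochner_Integration.integral_add) (use integ in auto)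

lemma L_diff: "j \<in> {1..r} \<Longrightarrow> L j (P - Q) = L j P - L j Q"
  unfolding L_def poly_diff by (rule Bochner_Integration.integral_diff) (use integ in auto)

lemma L_smult: "L j (Polynomial.smult c P) = c * L j P"
  unfolding L_def poly_smult by (rule integral_mult_right_zero)

lemma L_sum: "j \<in> {1..r} \<Longrightarrow> finite K \<Longrightarrow> L j (\<Sum>k\<in>K. f k) = (\<Sum>k\<in>K. L j (f k))"
  unfolding L_def poly_sum by (rule Bochner_Integration.integral_sum) (use integ in auto)

lemma L_zero: "L j 0 = 0"
  using L_smult[of j 0 0] by simp

lemma int_conv: "(\<integral>x. x ^ k * poly P x \<partial>(\<mu>s j)) = L j (monom 1 k * P)"
proof -
  have "poly (monom 1 k * P) = (\<lambda>x. x ^ k * poly P x)" by (simp add: fun_eq_iff poly_monom)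
  then show ?thesis unfolding L_def by simp
qed

lemma Lsum_cong: "(\<And>j. j \<in> {1..r} \<Longrightarrow> B j = C j) \<Longrightarrow> Lsum B = Lsum C"
  unfolding Lsum_def by simp

lemma Lsum_add: "Lsum (\<lambda>j. B j + C j) = Lsum B + Lsum C"
  unfolding Lsum_def by (simp add: L_add sum.distrib)

lemma Lsum_diff: "Lsum (\<lambda>j. B j - C j) = Lsum B - Lsum C"
  unfolding Lsum_def by (simp add: L_diff sum_subtractf)

lemma Lsum_smult: "Lsum (\<lambda>j. Polynomial.smult c (B j)) = c * Lsum B"
  unfolding Lsum_def by (simp add: L_smult sum_distrib_left)

lemma Lsum_sum: "finite K \<Longrightarrow> Lsum (\<lambda>j. \<Sum>k\<in>K. f k j) = (\<Sum>k\<in>K. Lsum (f k))"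
  unfolding Lsum_def by (simp add: L_sum sum.swap[of _ K])

lemma Pr_lin: "finite K \<Longrightarrow> Pr (\<Sum>m\<in>K. Polynomial.smult (c m) (f m)) B = (\<Sum>m\<in>K. c m * Pr (f m) B)"
proof -
  assume K: "finite K"
  have "Pr (\<Sum>m\<in>K. Polynomial.smult (c m) (f m)) B = Lsum (\<lambda>j. \<Sum>m\<in>K. Polynomial.smult (c m) (f m * B j))"
    unfolding Pr_def by (simp add: sum_distrib_right)
  also have "\<dots> = (\<Sum>m\<in>K. c m * Pr (f m) B)"
    using K by (simp add: Lsum_sum Lsum_smult Pr_def)
  finally show ?thesis .
qed

lemma Pr_expand: "degree q \<le> d \<Longrightarrow> Pr q B = (\<Sum>i\<le>d. coeff q i * Pr (monom 1 i) B)"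
proof -
  assume "degree q \<le> d"
  then have "q = (\<Sum>i\<le>d. Polynomial.smult (coeff q i) (monom 1 i))"
    using poly_as_sum_of_monoms'[of q d] by (simp add: smult_monom)
  then have "Pr q B = Pr (\<Sum>i\<le>d. Polynomial.smult (coeff q i) (monom 1 i)) B" by simp
  also have "\<dots> = (\<Sum>i\<le>d. coeff q i * Pr (monom 1 i) B)" by (rule Pr_lin) simp
  finally show ?thesis .
qed

lemma Pr_Bdiff: "Pr q (\<lambda>j. B j - C j) = Pr q B - Pr q C"
  unfolding Pr_def by (simp add: right_diff_distrib Lsum_diff)

lemma Pr_Bsum: "finite K \<Longrightarrow> Pr q (\<lambda>j. \<Sum>k\<in>K. Polynomial.smult (c k) (B k j)) = (\<Sum>k\<in>K. c k * Pr q (B k))"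
  unfolding Pr_def by (simp add: sum_distrib_left Lsum_sum Lsum_smult)

lemma tII: "typeII r \<mu>s n (typeII_poly r \<mu>s n)"
  using perf unfolding perfect_system_def typeII_poly_def by (metis theI')

lemma ortho:
  assumes P: "typeII r \<mu>s n P" and j: "j \<in> {1..r}" and Q: "cz Q (n j)"
  shows "L j (Q * P) = 0"
proof -
  have "Q * P = (\<Sum>i<n j. Polynomial.smult (coeff Q i) (monom 1 i * P))"
    by (subst cz_sum_monom[OF Q]) (simp add: sum_distrib_right smult_monom_mult)
  then have "L j (Q * P) = (\<Sum>i<n j. coeff Q i * L j (monom 1 i * P))"
    using j by (simp add: L_sum L_smult)
  also have "\<dots> = 0"
    using P j unfolding typeII_def by (simp add: int_conv)
  finally show ?thesis .
qed


lemma L_monom: "L j (monom c m) = c * L j (monom 1 m)"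
  by (metis L_smult smult_monom mult.right_neutral)

lemma sys:
  shows "(\<forall>B. (\<forall>j\<in>{1..r}. cz (B j) (n j)) \<and> (\<forall>i<mi_size r n. Pr (monom 1 i) B = 0) \<longrightarrow> (\<forall>j\<in>{1..r}. B j = 0))
    \<and> (\<forall>e. \<exists>B. (\<forall>j. j \<notin> {1..r} \<longrightarrow> B j = 0) \<and> (\<forall>j\<in>{1..r}. cz (B j) (n j)) \<and> (\<forall>i<mi_size r n. Pr (monom 1 i) B = e i))"
proof -
  define N where "N = mi_size r n"
  define Sg where "Sg = Sigma {1..r} (\<lambda>j. {..<n j})"
  have finSg: "finite Sg" unfolding Sg_def by auto
  have cardSg: "card Sg = N" unfolding Sg_def N_def mi_size_def by simp
  obtain g where g: "bij_betw g {..<N} Sg"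
    using ex_bij_betw_nat_finite[OF finSg] cardSg lessThan_atLeast0 by metis
  define M where "M i a = L (fst (g a)) (monom 1 (i + snd (g a)))" for i a
  have KI: "Pr (monom 1 i) (\<lambda>j. \<Sum>t<n j. monom (c (j,t)) t) = (\<Sum>a<N. M i a * c (g a))" for i c
  proof -
    have "Pr (monom 1 i) (\<lambda>j. \<Sum>t<n j. monom (c (j,t)) t) = (\<Sum>j\<in>{1..r}. \<Sum>t<n j. c (j,t) * L j (monom 1 (i+t)))"
      unfolding Pr_def Lsum_def
    proof (intro sum.cong refl)
      fix j assume j: "j \<in> {1..r}"
      have "L j (monom 1 i * (\<Sum>t<n j. monom (c (j, t)) t)) = L j (\<Sum>t<n j. monom (c (j, t)) (i+t))"
        by (simp add: sum_distrib_left mult_monom)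
      also have "\<dots> = (\<Sum>t<n j. c (j, t) * L j (monom 1 (i + t)))"
        using j by (simp add: L_sum L_monom[of j "c (j,_)"])
      finally show "L j (monom 1 i * (\<Sum>t<n j. monom (c (j, t)) t)) = (\<Sum>t<n j. c (j, t) * L j (monom 1 (i + t)))" .
    qed
    also have "\<dots> = (\<Sum>(j,t)\<in>Sg. c (j,t) * L j (monom 1 (i+t)))"
      unfolding Sg_def by (subst sum.Sigma) auto
    also have "\<dots> = (\<Sum>a<N. (\<lambda>(j,t). c (j,t) * L j (monom 1 (i+t))) (g a))"
      by (rule sum.reindex_bij_betw[OF g, symmetric])
    also have "\<dots> = (\<Sum>a<N. M i a * c (g a))"
      unfolding M_def by (intro sum.cong refl) (simp add: case_prod_beta)
    finally show ?thesis .
  qed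
  have hyp: "\<forall>i<N. v i = 0" if hv: "\<forall>a<N. (\<Sum>i<N. v i * M i a) = 0" for v
  proof -
    define q where "q = (\<Sum>i<N. monom (v i) i)"
    define P where "P = typeII_poly r \<mu>s n"
    have P: "typeII r \<mu>s n P" using tII P_def by simp
    have orth: "L j (monom 1 t * q) = 0" if "j\<in>{1..r}" "t < n j" for j t
    proof -
      have "(j,t) \<in> Sg" using that Sg_def by auto
      then obtain a where a: "a < N" "g a = (j,t)" using g
        by (metis bij_betw_def imageE lessThan_iff)
      have "L j (monom 1 t * q) = (\<Sum>i<N. v i * L j (monom 1 (i + t)))"
        unfolding q_def using that(1)
        by (simp add: sum_distrib_left mult_monom L_sum L_monom[of j "v _"] add.commute)
      also have "\<dots> = (\<Sum>i<N. v i * M i a)" using a unfolding M_def by simp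
      also have "\<dots> = 0" using hv a by simp
      finally show ?thesis .
    qed
    show ?thesis
    proof (cases "N = 0")
      case True then show ?thesis by simp
    next
      case False
      have czq: "cz q N" unfolding q_def by (rule cz_monom_sum)
      have dP: "degree P = N" "lead_coeff P = 1" using P unfolding typeII_def N_def by auto
      have dq: "q = 0 \<or> degree q < N" using czq cz_iff by auto
      have deg: "degree (P + q) = N"
        using dq dP by (metis add.right_neutral degree_add_eq_left)
      have lc: "lead_coeff (P + q) = 1" using deg dP czq unfolding cz_def by simp
      have "typeII r \<mu>s n (P + q)"
        unfolding typeII_def
      proof (intro conjI ballI allI impI)
        fix j k assume j: "j \<in> {1..r}" and k: "k < n j"
        have "L j (monom 1 k * P) = 0" using P j k unfolding typeII_def by (simp add: int_conv)
        then show "(\<integral>x. x ^ k * poly (P + q) x \<partial>\<mu>s j) = 0"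
          unfolding int_conv using orth[OF j k] j by (simp add: distrib_left L_add)
      qed (use deg lc N_def in auto)
      then have "P + q = P" using perf P unfolding perfect_system_def by blast
      then have "q = 0" by simp
      then show ?thesis using coeff_monom_sum[where n=N and c=v] unfolding q_def[symmetric] by (metis coeff_0)
    qed
  qed
  have SS1: "\<exists>b. \<forall>i<N. (\<Sum>a<N. M i a * b a) = e i" for e
    by (rule square_system(1)) (erule hyp)
  have SS2: "\<forall>a<N. b a = 0" if "\<forall>i<N. (\<Sum>a<N. M i a * b a) = 0" for b
    by (rule square_system(2)) (erule hyp, rule that)
  have part1: "\<forall>B. (\<forall>j\<in>{1..r}. cz (B j) (n j)) \<and> (\<forall>i<N. Pr (monom 1 i) B = 0) \<longrightarrow> (\<forall>j\<in>{1..r}. B j = 0)"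
  proof (intro allI impI)
    fix B assume hB: "(\<forall>j\<in>{1..r}. cz (B j) (n j)) \<and> (\<forall>i<N. Pr (monom 1 i) B = 0)"
    define c where "c = (\<lambda>(j,t). coeff (B j) t)"
    have Beq: "\<forall>j\<in>{1..r}. B j = (\<Sum>t<n j. monom (c (j,t)) t)"
      using hB cz_sum_monom unfolding c_def by auto
    have "\<forall>i<N. (\<Sum>a<N. M i a * c (g a)) = 0"
    proof (intro allI impI)
      fix i assume i: "i < N"
      have "Pr (monom 1 i) B = Pr (monom 1 i) (\<lambda>j. \<Sum>t<n j. monom (c (j,t)) t)"
        unfolding Pr_def using Beq by (intro Lsum_cong) auto
      then show "(\<Sum>a<N. M i a * c (g a)) = 0" using hB i KI by simp
    qed
    then have cz0: "\<forall>a<N. c (g a) = 0" by (rule SS2)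
    have "\<forall>j\<in>{1..r}. \<forall>t<n j. c (j,t) = 0"
    proof (intro ballI allI impI)
      fix j t assume "j \<in> {1..r}" "t < n j"
      then have "(j,t) \<in> Sg" using Sg_def by auto
      then obtain a where a: "a < N" "g a = (j,t)" using g
        by (metis bij_betw_def imageE lessThan_iff)
      then show "c (j,t) = 0" using cz0 by metis
    qed
    then show "\<forall>j\<in>{1..r}. B j = 0" using Beq by simp
  qed
  have part2: "\<forall>e. \<exists>B. (\<forall>j. j \<notin> {1..r} \<longrightarrow> B j = 0) \<and> (\<forall>j\<in>{1..r}. cz (B j) (n j)) \<and> (\<forall>i<N. Pr (monom 1 i) B = e i)"
  proof
    fix e
    obtain b where b: "\<forall>i<N. (\<Sum>a<N. M i a * b a) = e i" using SS1 by blast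
    define c where "c x = b (inv_into {..<N} g x)" for x
    have cg: "c (g a) = b a" if "a < N" for a
      using g that by (simp add: c_def bij_betw_def inv_into_f_f)
    define B where "B j = (if j \<in> {1..r} then \<Sum>t<n j. monom (c (j,t)) t else 0)" for j
    have "Pr (monom 1 i) B = e i" if i: "i < N" for i
    proof -
      have "Pr (monom 1 i) B = Pr (monom 1 i) (\<lambda>j. \<Sum>t<n j. monom (c (j,t)) t)"
        unfolding Pr_def B_def by (intro Lsum_cong) auto
      also have "\<dots> = (\<Sum>a<N. M i a * c (g a))" by (rule KI)
      also have "\<dots> = (\<Sum>a<N. M i a * b a)" by (intro sum.cong refl) (simp add: cg)
      finally show ?thesis using b i by simp
    qed
    moreover have "\<forall>j\<in>{1..r}. cz (B j) (n j)" unfolding B_def using cz_monom_sum by simp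
    moreover have "\<forall>j. j \<notin> {1..r} \<longrightarrow> B j = 0" unfolding B_def by simp
    ultimately show "\<exists>B. (\<forall>j. j \<notin> {1..r} \<longrightarrow> B j = 0) \<and> (\<forall>j\<in>{1..r}. cz (B j) (n j)) \<and> (\<forall>i<N. Pr (monom 1 i) B = e i)"
      by blast
  qed
  show ?thesis unfolding N_def[symmetric] using part1 part2 by blast
qed


lemma tI_ex:
  assumes N1: "mi_size r n \<ge> 1"
  shows "typeI r \<mu>s n (typeI_vec r \<mu>s n)"
proof -
  define N where "N = mi_size r n"
  have conv: "(\<Sum>j=1..r. \<integral>x. x ^ k * poly (A j) x \<partial>\<mu>s j) = Pr (monom 1 k) A" for A k
    by (simp add: int_conv Pr_def Lsum_def)
  note S = sys[of n, unfolded N_def[symmetric]]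
  have "\<exists>!A. typeI r \<mu>s n A"
  proof (rule ex_ex1I)
    obtain B where B: "\<forall>j. j \<notin> {1..r} \<longrightarrow> B j = 0" "\<forall>j\<in>{1..r}. cz (B j) (n j)"
      "\<forall>i<N. Pr (monom 1 i) B = (if i = N - 1 then 1 else 0)"
      using S[THEN conjunct2, rule_format, of "\<lambda>i. if i = N - 1 then 1 else 0"] by blast
    have "typeI r \<mu>s n B"
      unfolding typeI_def conv N_def[symmetric]
    proof (intro conjI allI impI ballI)
      fix k assume "k + 2 \<le> N"
      then show "Pr (monom 1 k) B = 0" using B(3) by auto
    next
      show "Pr (monom 1 (N - 1)) B = 1" using B(3) N1 N_def by auto
    qed (use B cz_iff in auto)
    then show "\<exists>A. typeI r \<mu>s n A" by blast
  next
    fix A1 A2 assume A1: "typeI r \<mu>s n A1" and A2: "typeI r \<mu>s n A2"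
    define D where "D j = A1 j - A2 j" for j
    have czD: "\<forall>j\<in>{1..r}. cz (D j) (n j)"
    proof
      fix j assume j: "j \<in> {1..r}"
      have "cz (A1 j) (n j)" "cz (A2 j) (n j)" using A1 A2 j unfolding typeI_def cz_iff by auto
      then show "cz (D j) (n j)" unfolding D_def by (rule cz_diff)
    qed
    have "\<forall>i<N. Pr (monom 1 i) D = 0"
    proof (intro allI impI)
      fix i assume i: "i < N"
      have "Pr (monom 1 i) D = Pr (monom 1 i) A1 - Pr (monom 1 i) A2"
        unfolding D_def by (rule Pr_Bdiff)
      moreover have "Pr (monom 1 i) A1 = Pr (monom 1 i) A2"
      proof (cases "i + 2 \<le> N")
        case True then show ?thesis using A1 A2 unfolding typeI_def conv N_def by simp
      next
        case False then have "i = N - 1" using i by auto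
        then show ?thesis using A1 A2 unfolding typeI_def conv N_def by simp
      qed
      ultimately show "Pr (monom 1 i) D = 0" by simp
    qed
    then have D0: "\<forall>j\<in>{1..r}. D j = 0" using S[THEN conjunct1, rule_format, of D] czD by blast
    show "A1 = A2"
    proof
      fix j show "A1 j = A2 j"
      proof (cases "j \<in> {1..r}")
        case True then show ?thesis using D0 unfolding D_def by simp
      next
        case False then show ?thesis using A1 A2 unfolding typeI_def by simp
      qed
    qed
  qed
  then show ?thesis unfolding typeI_vec_def by (rule theI')
qed

end

lemma expand:
  assumes p: "\<forall>k. degree (p k) = k \<and> lead_coeff (p k) = (1::real)"
  shows "degree Q \<le> d \<Longrightarrow> \<exists>c. Q = (\<Sum>k\<le>d. Polynomial.smult (c k) (p k))"
proof (induction d arbitrary: Q)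
  case 0
  have "degree (p 0) = 0" "coeff (p 0) 0 = 1" using p by (metis, metis)
  then have "p 0 = [:1:]" using degree_0_id[of "p 0"] by simp
  moreover have "Q = [:coeff Q 0:]" using 0 degree_0_id[of Q] by simp
  ultimately have "Q = (\<Sum>k\<le>0. Polynomial.smult ((\<lambda>_. coeff Q 0) k) (p k))" by simp
  then show ?case by (rule exI[where x="\<lambda>_. coeff Q 0"])
next
  case (Suc d)
  define Q' where "Q' = Q - Polynomial.smult (coeff Q (Suc d)) (p (Suc d))"
  have "cz Q (Suc (Suc d))" using Suc.prems cz_iff by auto
  moreover have "cz (p (Suc d)) (Suc (Suc d))" using p cz_iff by auto
  ultimately have "cz Q' (Suc (Suc d))" unfolding Q'_def by (intro cz_diff cz_smult)
  moreover have "coeff (p (Suc d)) (Suc d) = 1" using p by metis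
  then have "coeff Q' (Suc d) = 0" unfolding Q'_def by simp
  ultimately have "cz Q' (Suc d)" unfolding cz_def by (metis le_antisym not_less_eq_eq)
  then have "degree Q' \<le> d" using cz_iff by fastforce
  then obtain c where c: "Q' = (\<Sum>k\<le>d. Polynomial.smult (c k) (p k))" using Suc.IH by blast
  define c' where "c' = c(Suc d := coeff Q (Suc d))"
  have "(\<Sum>k\<le>Suc d. Polynomial.smult (c' k) (p k)) = (\<Sum>k\<le>d. Polynomial.smult (c' k) (p k)) + Polynomial.smult (coeff Q (Suc d)) (p (Suc d))"
    by (simp add: c'_def)
  also have "(\<Sum>k\<le>d. Polynomial.smult (c' k) (p k)) = Q'"
    unfolding c c'_def by (intro sum.cong refl) auto
  finally have "Q = (\<Sum>k\<le>Suc d. Polynomial.smult (c' k) (p k))" unfolding Q'_def by simp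
  then show ?case by blast
qed

lemma path_size:
  assumes "is_path r ns" shows "mi_size r (ns m) = m"
proof (induction m)
  case 0 then show ?case using assms unfolding is_path_def mi_size_def by simp
next
  case (Suc m)
  obtain i where i: "i \<in> {1..r}" "ns (Suc m) = (ns m)(i := ns m i + 1)"
    using assms unfolding is_path_def by blast
  have "mi_size r (ns (Suc m)) = (\<Sum>j\<in>{1..r}. ((ns m)(i := ns m i + 1)) j)"
    unfolding mi_size_def i(2) by simp
  also have "\<dots> = (ns m i + 1) + (\<Sum>j\<in>{1..r} - {i}. ns m j)"
    using i(1) by (subst sum.remove[of _ i]) auto
  also have "\<dots> = 1 + mi_size r (ns m)"
    unfolding mi_size_def using i(1) by (subst (2) sum.remove[of _ i]) auto
  finally show ?case using Suc by simp
qed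

lemma path_mono:
  assumes "is_path r ns" and "m \<le> m'" shows "ns m j \<le> ns m' j"
proof -
  have "ns k j \<le> ns (Suc k) j" for k
  proof -
    obtain i where i: "ns (Suc k) = (ns k)(i := ns k i + 1)"
      using assms unfolding is_path_def by blast
    then show ?thesis by simp
  qed
  then show ?thesis using lift_Suc_mono_le[of "\<lambda>k. ns k j"] assms(2) by blast
qed


locale mop_path = mop +
  fixes ns :: "nat \<Rightarrow> nat \<Rightarrow> nat"
  assumes path: "is_path r ns"
    and lim: "\<forall>j\<in>{1..r}. filterlim (\<lambda>m. ns m j) at_top sequentially"
begin

abbreviation p where "p m \<equiv> typeII_poly r \<mu>s (ns m)"
abbreviation A where "A k \<equiv> typeI_vec r \<mu>s (ns (Suc k))"
abbreviation J where "J \<equiv> Jmat r \<mu>s ns"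

lemma pII: "typeII r \<mu>s (ns m) (p m)" by (rule tII)

lemma p_deg: "degree (p m) = m" and p_lc: "lead_coeff (p m) = 1"
  using pII[of m] path_size[OF path] unfolding typeII_def by auto

lemma tI: "typeI r \<mu>s (ns (Suc k)) (A k)"
  by (rule tI_ex) (simp add: path_size[OF path])

lemma A_cz: "j \<in> {1..r} \<Longrightarrow> cz (A k j) (ns (Suc k) j)"
  using tI[of k] unfolding typeI_def cz_iff by auto

lemma S_A: "i \<le> k \<Longrightarrow> Pr (monom 1 i) (A k) = (if i = k then 1 else 0)"
proof -
  assume ik: "i \<le> k"
  have conv: "(\<Sum>j=1..r. \<integral>x. x ^ i' * poly (A k j) x \<partial>\<mu>s j) = Pr (monom 1 i') (A k)" for i'
    by (simp add: int_conv Pr_def Lsum_def)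
  have ms: "mi_size r (ns (Suc k)) = Suc k" by (rule path_size[OF path])
  have h1: "\<forall>k'. k' + 2 \<le> Suc k \<longrightarrow> Pr (monom 1 k') (A k) = 0"
    using tI[of k] unfolding typeI_def ms conv by blast
  have h2: "Pr (monom 1 k) (A k) = 1"
    using tI[of k] unfolding typeI_def ms conv by simp
  show ?thesis
  proof (cases "i = k")
    case True then show ?thesis using h2 by simp
  next
    case False then have "i + 2 \<le> Suc k" using ik by simp
    then show ?thesis using h1 False by simp
  qed
qed

lemma bio: "Pr (p m) (A k) = (if m = k then 1 else 0)"
proof (cases "m \<le> k")
  case True
  have "Pr (p m) (A k) = (\<Sum>i\<le>k. coeff (p m) i * Pr (monom 1 i) (A k))"
    using True p_deg[of m] by (intro Pr_expand) simp
  also have "\<dots> = (\<Sum>i\<le>k. if i = k then coeff (p m) k else 0)"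
    by (intro sum.cong refl) (simp add: S_A)
  also have "\<dots> = coeff (p m) k" by simp
  also have "\<dots> = (if m = k then 1 else 0)"
  proof (cases "m = k")
    case True then show ?thesis using p_deg[of m] p_lc[of m] by simp
  next
    case False then have "degree (p m) < k" using p_deg[of m] \<open>m \<le> k\<close> by simp
    then show ?thesis using False coeff_eq_0 by simp
  qed
  finally show ?thesis .
next
  case False
  have z: "L j (p m * A k j) = 0" if j: "j \<in> {1..r}" for j
  proof -
    have "ns (Suc k) j \<le> ns m j" using path_mono[OF path] False by simp
    then have "cz (A k j) (ns m j)" by (rule cz_mono[OF A_cz[OF j]])
    then have "L j (A k j * p m) = 0" by (rule ortho[OF pII j])
    then show ?thesis by (simp only: mult.commute)
  qed
  have "Pr (p m) (A k) = 0" unfolding Pr_def Lsum_def by (rule sum.neutral) (use z in simp)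
  then show ?thesis using False by simp
qed

lemma pfam: "\<forall>k. degree (p k) = k \<and> lead_coeff (p k) = 1"
  using p_deg p_lc by blast

lemma Jprop: "(\<forall>m>Suc k. J k m = 0) \<and> [:0, 1:] * p k = (\<Sum>m\<le>Suc k. Polynomial.smult (J k m) (p m))"
proof -
  let ?P = "\<lambda>c. (\<forall>m>Suc k. c m = 0) \<and> [:0, 1:] * p k = (\<Sum>m\<le>Suc k. Polynomial.smult (c m) (p m))"
  have "\<exists>!c. ?P c"
  proof (rule ex_ex1I)
    have pk0: "p k \<noteq> 0" using p_lc[of k] by auto
    have "degree ([:0, 1:] * p k) = Suc k" using pk0 p_deg[of k] by simp
    then obtain c where c: "[:0, 1:] * p k = (\<Sum>m\<le>Suc k. Polynomial.smult (c m) (p m))"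
      using expand[OF pfam, of "[:0, 1:] * p k" "Suc k"] by auto
    define c' where "c' m = (if m \<le> Suc k then c m else 0)" for m
    have "(\<Sum>m\<le>Suc k. Polynomial.smult (c' m) (p m)) = (\<Sum>m\<le>Suc k. Polynomial.smult (c m) (p m))"
      unfolding c'_def by (intro sum.cong refl) auto
    then have "?P c'" using c unfolding c'_def by auto
    then show "\<exists>c. ?P c" by blast
  next
    fix c1 c2 assume c1: "?P c1" and c2: "?P c2"
    have co: "Pr ([:0, 1:] * p k) (A m) = c m" if "?P c" "m \<le> Suc k" for c m
    proof -
      have "Pr ([:0, 1:] * p k) (A m) = Pr (\<Sum>m'\<le>Suc k. Polynomial.smult (c m') (p m')) (A m)"
        using that(1) by simp
      also have "\<dots> = (\<Sum>m'\<le>Suc k. c m' * Pr (p m') (A m))"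
        by (rule Pr_lin) simp
      also have "\<dots> = (\<Sum>m'\<le>Suc k. if m' = m then c m else 0)"
        by (intro sum.cong refl) (simp add: bio)
      also have "\<dots> = c m" using that(2) by simp
      finally show ?thesis .
    qed
    show "c1 = c2"
    proof
      fix m show "c1 m = c2 m"
        using co[OF c1, of m] co[OF c2, of m] c1 c2 by (cases "m \<le> Suc k") auto
    qed
  qed
  then have "?P (J k)" unfolding Jmat_def by (rule theI')
  then show ?thesis .
qed

lemma Jrep: "J k l = Pr (p k) (\<lambda>j. [:0, 1:] * A l j)"
proof -
  have "Pr ([:0, 1:] * p k) (A l) = Pr (\<Sum>m\<le>Suc k. Polynomial.smult (J k m) (p m)) (A l)"
    using Jprop[of k] by simp
  also have "\<dots> = (\<Sum>m\<le>Suc k. J k m * Pr (p m) (A l))" by (rule Pr_lin) simp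
  also have "\<dots> = (\<Sum>m\<le>Suc k. if m = l then J k l else 0)"
    by (intro sum.cong refl) (simp add: bio)
  also have "\<dots> = J k l" using Jprop[of k] by auto
  finally have "Pr ([:0, 1:] * p k) (A l) = J k l" .
  moreover have "Pr ([:0, 1:] * p k) (A l) = Pr (p k) (\<lambda>j. [:0, 1:] * A l j)"
    unfolding Pr_def by (simp add: ac_simps)
  ultimately show ?thesis by simp
qed

lemma main:
  "\<exists>N. (\<forall>k>N. J k l = 0) \<and>
    (\<forall>x. x * Qfun r \<mu>s w (ns (Suc l)) x = (\<Sum>k\<le>N. J k l * Qfun r \<mu>s w (ns (Suc k)) x))"
proof -
  have "\<forall>j\<in>{1..r}. eventually (\<lambda>m. Suc (ns (Suc l) j) \<le> ns m j) sequentially"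
  proof
    fix j assume j: "j \<in> {1..r}"
    show "eventually (\<lambda>m. Suc (ns (Suc l) j) \<le> ns m j) sequentially"
      using lim[rule_format, OF j] unfolding filterlim_at_top by blast
  qed
  then have "eventually (\<lambda>m. \<forall>j\<in>{1..r}. Suc (ns (Suc l) j) \<le> ns m j) sequentially"
    by (intro eventually_ball_finite) auto
  then obtain N where "\<forall>n\<ge>N. \<forall>j\<in>{1..r}. Suc (ns (Suc l) j) \<le> ns n j"
    unfolding eventually_sequentially by blast
  then have N: "\<forall>j\<in>{1..r}. Suc (ns (Suc l) j) \<le> ns N j" by blast
  have Jz: "J k l = 0" if k: "k > N" for k
  proof -
    have z: "L j (p k * ([:0, 1:] * A l j)) = 0" if j: "j \<in> {1..r}" for j
    proof -
      have a: "Suc (ns (Suc l) j) \<le> ns N j" using N j by blast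
      have "ns N j \<le> ns k j" using path_mono[OF path] k by simp
      then have "Suc (ns (Suc l) j) \<le> ns k j" using a by linarith
      then have "cz ([:0, 1:] * A l j) (ns k j)" by (rule cz_mono[OF cz_x[OF A_cz[OF j]]])
      then have "L j (([:0, 1:] * A l j) * p k) = 0" by (rule ortho[OF pII j])
      then show ?thesis by (simp only: mult.commute)
    qed
    have "Pr (p k) (\<lambda>j. [:0, 1:] * A l j) = 0"
      unfolding Pr_def Lsum_def by (rule sum.neutral) (use z in simp)
    then show ?thesis by (simp add: Jrep)
  qed
  define D where "D j = [:0, 1:] * A l j - (\<Sum>k\<le>N. Polynomial.smult (J k l) (A k j))" for j
  have PD: "Pr (p m) D = 0" for m
  proof -
    have e1: "Pr (p m) D = J m l - (\<Sum>k\<le>N. J k l * Pr (p m) (A k))"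
      unfolding D_def Pr_Bdiff by (simp add: Pr_Bsum Jrep)
    have e2: "(\<Sum>k\<le>N. J k l * Pr (p m) (A k)) = (\<Sum>k\<le>N. if k = m then J m l else 0)"
      by (intro sum.cong refl) (simp add: bio)
    have e3: "(\<Sum>k\<le>N. if k = m then J m l else 0) = J m l"
      using Jz[of m] by (cases "m \<le> N") auto
    show ?thesis using e1 e2 e3 by simp
  qed
  have PDall: "Pr q D = 0" for q
  proof -
    obtain c where c: "q = (\<Sum>k\<le>degree q. Polynomial.smult (c k) (p k))"
      using expand[OF pfam, of q "degree q"] by blast
    show ?thesis by (subst c) (simp add: Pr_lin PD)
  qed
  have czD: "\<forall>j\<in>{1..r}. cz (D j) (ns (Suc N) j)"
  proof
    fix j assume j: "j \<in> {1..r}"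
    have a: "Suc (ns (Suc l) j) \<le> ns N j" using N j by blast
    have "ns N j \<le> ns (Suc N) j" using path_mono[OF path] by simp
    then have "Suc (ns (Suc l) j) \<le> ns (Suc N) j" using a by linarith
    then have "cz ([:0, 1:] * A l j) (ns (Suc N) j)" by (rule cz_mono[OF cz_x[OF A_cz[OF j]]])
    moreover have "cz (\<Sum>k\<le>N. Polynomial.smult (J k l) (A k j)) (ns (Suc N) j)"
    proof (intro cz_sum cz_smult)
      fix k assume "k \<in> {..N}"
      then have "ns (Suc k) j \<le> ns (Suc N) j" using path_mono[OF path] by simp
      then show "cz (A k j) (ns (Suc N) j)" by (rule cz_mono[OF A_cz[OF j]])
    qed simp
    ultimately show "cz (D j) (ns (Suc N) j)" unfolding D_def by (rule cz_diff)
  qed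
  have D0: "\<forall>j\<in>{1..r}. D j = 0"
    using sys[of "ns (Suc N)", THEN conjunct1, rule_format, of D] czD PDall by blast
  have pt: "x * poly (A l j) x = (\<Sum>k\<le>N. J k l * poly (A k j) x)" if j: "j \<in> {1..r}" for j x
  proof -
    have "poly (D j) x = 0" using D0 j by simp
    then show ?thesis unfolding D_def by (simp add: poly_sum)
  qed
  have "x * Qfun r \<mu>s w (ns (Suc l)) x = (\<Sum>k\<le>N. J k l * Qfun r \<mu>s w (ns (Suc k)) x)" for x
  proof -
    have "x * Qfun r \<mu>s w (ns (Suc l)) x = (\<Sum>j=1..r. (x * poly (A l j) x) * w j x)"
      unfolding Qfun_def by (simp add: sum_distrib_left ac_simps)
    also have "\<dots> = (\<Sum>j=1..r. \<Sum>k\<le>N. J k l * (poly (A k j) x * w j x))"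
      by (intro sum.cong refl) (simp add: pt sum_distrib_left sum_distrib_right mult.assoc)
    also have "\<dots> = (\<Sum>k\<le>N. J k l * Qfun r \<mu>s w (ns (Suc k)) x)"
      unfolding Qfun_def sum_distrib_left by (rule sum.swap)
    finally show ?thesis .
  qed
  then show ?thesis using Jz by blast
qed

end

theorem proposition2:
  fixes r :: nat and \<mu>s :: "nat \<Rightarrow> real measure" and \<mu> :: "real measure"
    and w :: "nat \<Rightarrow> real \<Rightarrow> real" and ns :: "nat \<Rightarrow> nat \<Rightarrow> nat" and l :: nat
  assumes "r \<ge> 1"
    and "\<forall>j\<in>{1..r}. sets (\<mu>s j) = sets borel"
    and "\<forall>j\<in>{1..r}. \<forall>k::nat. integrable (\<mu>s j) (\<lambda>x. x ^ k)"
    and "perfect_system r \<mu>s"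
    and "sets \<mu> = sets borel"
    and "\<forall>j\<in>{1..r}. w j \<in> borel_measurable borel \<and> (\<forall>x. 0 \<le> w j x) \<and>
           \<mu>s j = density \<mu> (\<lambda>x. ennreal (w j x))"
    and "is_path r ns"
    and "\<forall>j\<in>{1..r}. filterlim (\<lambda>m. ns m j) at_top sequentially"
  shows "\<exists>N. (\<forall>k>N. Jmat r \<mu>s ns k l = 0) \<and>
    (\<forall>x. x * Qfun r \<mu>s w (ns (Suc l)) x =
         (\<Sum>k\<le>N. Jmat r \<mu>s ns k l * Qfun r \<mu>s w (ns (Suc k)) x))"
proof -
  interpret mop_path r \<mu>s ns
    using assms by unfold_locales auto
  show ?thesis by (rule main)
qed

end
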